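(* For every $i\in\{1,\dots,m-1\}$, every real $\varphi$ and every real $d$ (of either sign), there exist finite activation sequences (compositions of the moves $f_1(\cdot),\dots,f_m(\cdot)$ with positive arguments) realizing $h_i(\varphi)$ and $g_i(d)$, respectively.
   Context: A swarm of $n$ planar robots; robot $j$ has state $(x_j,y_j,\theta_j)$, $\theta_j$ mod $2\pi$; all robots have the same turning radius $r>0$. Groups $G_1,\dots,G_m$ with activation vectors $\alpha_i\in\{0,1\}^n$ ($\alpha_{i,j}=1$ iff robot $j\in G_i$); the patterns $(\alpha_{1,j},\dots,\alpha_{m-1,j})$ are pairwise distinct, none all zeros, none all ones; $G_m=\emptyset$. Dynamics: one group $\nu(t)$ active at a time, input $u(t)>0$; with $a_j=\alpha_{\nu(t),j}$: $\dot x_j=a_j\cos\theta_j u$, $\dot y_j=a_j\sin\theta_j u$, $\dot\theta_j=(1-a_j)u/r$. For $i<m$, $d>0$: $f_i(d)$ = activate $G_i$ with $\int u\,dt=d$ (members translate $d$ along heading, non-members rotate in place by $d/r$). For $\varphi>0$: $f_m(\varphi)$ = activate $G_m$ with $\int u\,dt=r\varphi$ (all robots rotate in place by $\varphi$). $h_i(\varphi)$: net effect in which members of $G_i$ are unchanged and non-members keep their positions with orientation increased by $\varphi$ mod $2\pi$. $g_i(d)$: net effect in which each member $j$ of $G_i$ is translated by $d(\cos\theta_j,\sin\theta_j)$ with unchanged orientation and non-members are unchanged. *)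

theory Defs
  imports Complex_Main
begin

(* Robots are indexed by a finite type 'r.  A configuration assigns to each robot
   its state (x, y, theta); theta is a real representative of an angle mod 2 pi. *)
type_synonym 'r config = "'r \<Rightarrow> real \<times> real \<times> real"

(* alpha i j: robot j belongs to group G_i  (groups indexed 1..m) *)

definition move :: "(nat \<Rightarrow> 'r \<Rightarrow> bool) \<Rightarrow> nat \<Rightarrow> real \<Rightarrow> nat \<Rightarrow> real \<Rightarrow> 'r config \<Rightarrow> 'r config" where
  "move \<alpha> m r k t c = (\<lambda>j. (case c j of (x, y, \<theta>) \<Rightarrow>
      if k = m then (x, y, \<theta> + t)
      else if \<alpha> k j then (x + t * cos \<theta>, y + t * sin \<theta>, \<theta>)
      else (x, y, \<theta> + t / r)))"

definition exec_seq :: "(nat \<Rightarrow> 'r \<Rightarrow> bool) \<Rightarrow> nat \<Rightarrow> real \<Rightarrow> (nat \<times> real) list \<Rightarrow> 'r config \<Rightarrow> 'r config" where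
  "exec_seq \<alpha> m r s c = foldl (\<lambda>c' (k, t). move \<alpha> m r k t c') c s"

definition admissible_seq :: "nat \<Rightarrow> (nat \<times> real) list \<Rightarrow> bool" where
  "admissible_seq m s = (\<forall>(k, t) \<in> set s. 1 \<le> k \<and> k \<le> m \<and> t > 0)"

definition angle_eq :: "real \<Rightarrow> real \<Rightarrow> bool" where
  "angle_eq a b = (\<exists>k::int. a - b = 2 * pi * of_int k)"

definition config_eq :: "'r config \<Rightarrow> 'r config \<Rightarrow> bool" where
  "config_eq c c' = (\<forall>j. fst (c j) = fst (c' j) \<and> fst (snd (c j)) = fst (snd (c' j))
                        \<and> angle_eq (snd (snd (c j))) (snd (snd (c' j))))"

definition h_eff :: "(nat \<Rightarrow> 'r \<Rightarrow> bool) \<Rightarrow> nat \<Rightarrow> real \<Rightarrow> 'r config \<Rightarrow> 'r config" where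
  "h_eff \<alpha> i \<phi> c = (\<lambda>j. (case c j of (x, y, \<theta>) \<Rightarrow>
      if \<alpha> i j then (x, y, \<theta>) else (x, y, \<theta> + \<phi>)))"

definition g_eff :: "(nat \<Rightarrow> 'r \<Rightarrow> bool) \<Rightarrow> nat \<Rightarrow> real \<Rightarrow> 'r config \<Rightarrow> 'r config" where
  "g_eff \<alpha> i d c = (\<lambda>j. (case c j of (x, y, \<theta>) \<Rightarrow>
      if \<alpha> i j then (x + d * cos \<theta>, y + d * sin \<theta>, \<theta>) else (x, y, \<theta>)))"

definition realizes :: "(nat \<Rightarrow> 'r \<Rightarrow> bool) \<Rightarrow> nat \<Rightarrow> real \<Rightarrow> ('r config \<Rightarrow> 'r config) \<Rightarrow> bool" where
  "realizes \<alpha> m r F = (\<exists>s. admissible_seq m s \<and> (\<forall>c. config_eq (exec_seq \<alpha> m r s c) (F c)))"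

end

theory Submission
  imports Defs
begin

definition hseq :: "nat \<Rightarrow> nat \<Rightarrow> real \<Rightarrow> (nat \<times> real) list" where
  "hseq m i D = [(i, D), (m, pi), (i, D), (m, pi)]"

lemma exec_append: "exec_seq \<alpha> m r (s1 @ s2) c = exec_seq \<alpha> m r s2 (exec_seq \<alpha> m r s1 c)"
  by (simp add: exec_seq_def)

lemma exec_hseq:
  assumes "i \<noteq> m" "c j = (x, y, \<theta>)"
  shows "exec_seq \<alpha> m r (hseq m i D) c j =
    (if \<alpha> i j then (x, y, \<theta> + 2*pi) else (x, y, \<theta> + 2*(D/r) + 2*pi))"
  using assms by (simp add: exec_seq_def hseq_def move_def cos_add sin_add)

lemma exec_one:
  assumes "i \<noteq> m" "c j = (x, y, \<theta>)"
  shows "exec_seq \<alpha> m r [(i,d)] c j =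
    (if \<alpha> i j then (x + d * cos \<theta>, y + d * sin \<theta>, \<theta>) else (x, y, \<theta> + d/r))"
  using assms by (simp add: exec_seq_def move_def)

lemma exec_three:
  assumes "i \<noteq> m" "c j = (x, y, \<theta>)"
  shows "exec_seq \<alpha> m r [(m,pi),(i,d),(m,pi)] c j =
    (if \<alpha> i j then (x - d * cos \<theta>, y - d * sin \<theta>, \<theta> + 2*pi) else (x, y, \<theta> + d/r + 2*pi))"
  using assms by (simp add: exec_seq_def move_def cos_add sin_add)

lemma choose_D:
  assumes "r > 0"
  shows "\<exists>D>0. \<exists>k::int. 2*(D/r) = \<psi> + 2*pi*of_int k"
proof -
  define k where "k = 1 - \<lfloor>\<psi>/(2*pi)\<rfloor>"
  define D where "D = r * (\<psi> + 2*pi*of_int k) / 2"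
  have "of_int \<lfloor>\<psi>/(2*pi)\<rfloor> \<le> \<psi>/(2*pi)" by linarith
  hence "of_int \<lfloor>\<psi>/(2*pi)\<rfloor> * (2*pi) \<le> \<psi>" using pi_gt_zero
    by (subst (asm) pos_le_divide_eq) auto
  hence "\<psi> + 2*pi*of_int k > 0" unfolding k_def using pi_gt_zero by (simp add: algebra_simps) (smt (verit) pi_gt_zero)
  hence "D > 0" using assms unfolding D_def by simp
  moreover have "2*(D/r) = \<psi> + 2*pi*of_int k" using assms unfolding D_def by simp
  ultimately show ?thesis by blast
qed

lemma angle_shift: "angle_eq (a + 2*pi*of_int k) a"
  by (simp add: angle_eq_def)


lemma g_from_prefix:
  assumes r_pos: "r > 0" and im: "i \<noteq> m" "1 \<le> i" "i \<le> m"
    and adm: "admissible_seq m P"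
    and P: "\<And>c j x y \<theta>. c j = (x, y, \<theta>) \<Longrightarrow> exec_seq \<alpha> m r P c j =
        (if \<alpha> i j then (x + d * cos \<theta>, y + d * sin \<theta>, \<theta> + 2*pi*of_int a) else (x, y, \<theta> + b))"
  shows "realizes \<alpha> m r (g_eff \<alpha> i d)"
proof -
  obtain D k where D: "D > 0" and Dk: "2*(D/r) = -b + 2*pi*of_int k"
    using choose_D[OF r_pos] by blast
  have admH: "admissible_seq m (P @ hseq m i D)"
    using adm D im by (auto simp: admissible_seq_def hseq_def)
  have "config_eq (exec_seq \<alpha> m r (P @ hseq m i D) c) (g_eff \<alpha> i d c)" for c
    unfolding config_eq_def
  proof
    fix j
    obtain x y \<theta> where cj: "c j = (x, y, \<theta>)" by (cases "c j") auto
    have e: "exec_seq \<alpha> m r (P @ hseq m i D) c j =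
       (if \<alpha> i j then (x + d * cos \<theta>, y + d * sin \<theta>, \<theta> + 2*pi*of_int a + 2*pi)
        else (x, y, \<theta> + b + 2*(D/r) + 2*pi))"
      unfolding exec_append
      by (cases "\<alpha> i j") (simp_all add: exec_hseq[OF im(1), where c="exec_seq \<alpha> m r P c" and j=j] P[where c=c and j=j, OF cj])
    show "fst (exec_seq \<alpha> m r (P @ hseq m i D) c j) = fst (g_eff \<alpha> i d c j) \<and>
        fst (snd (exec_seq \<alpha> m r (P @ hseq m i D) c j)) = fst (snd (g_eff \<alpha> i d c j)) \<and>
        angle_eq (snd (snd (exec_seq \<alpha> m r (P @ hseq m i D) c j))) (snd (snd (g_eff \<alpha> i d c j)))"
    proof (cases "\<alpha> i j")
      case True
      have "\<theta> + 2*pi*of_int a + 2*pi - \<theta> = 2*pi*of_int (a+1)" by (simp add: algebra_simps)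
      thus ?thesis using True unfolding e g_eff_def cj angle_eq_def by (auto intro!: exI[of _ "a+1"])
    next
      case False
      have "\<theta> + b + 2*(D/r) + 2*pi - \<theta> = 2*pi*of_int (k+1)" using Dk by (simp add: algebra_simps)
      thus ?thesis using False unfolding e g_eff_def cj angle_eq_def by (auto intro!: exI[of _ "k+1"])
    qed
  qed
  thus ?thesis unfolding realizes_def using admH by blast
qed

theorem mainTheorem3:
  fixes \<alpha> :: "nat \<Rightarrow> 'r::finite \<Rightarrow> bool" and m :: nat and r :: real
  assumes r_pos: "r > 0"
    and distinct_patterns: "\<And>j j'. j \<noteq> j' \<Longrightarrow> \<exists>i\<in>{1..<m}. \<alpha> i j \<noteq> \<alpha> i j'"
    and not_all_zero: "\<And>j. \<exists>i\<in>{1..<m}. \<alpha> i j"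
    and not_all_one: "\<And>j. \<exists>i\<in>{1..<m}. \<not> \<alpha> i j"
    and Gm_empty: "\<And>j. \<not> \<alpha> m j"
  shows "\<forall>i\<in>{1..<m}. \<forall>\<phi> d :: real.
           realizes \<alpha> m r (h_eff \<alpha> i \<phi>) \<and> realizes \<alpha> m r (g_eff \<alpha> i d)"
proof (intro ballI allI conjI)
  fix i \<phi> d assume i: "i \<in> {1..<m}"
  hence im: "i \<noteq> m" "1 \<le> i" "i \<le> m" by auto
  have adm_h: "admissible_seq m (hseq m i D)" if "D > 0" for D
    using that im by (auto simp: admissible_seq_def hseq_def)
  show "realizes \<alpha> m r (h_eff \<alpha> i \<phi>)"
  proof -
    obtain D k where D: "D > 0" and Dk: "2*(D/r) = \<phi> + 2*pi*of_int k"
      using choose_D[OF r_pos] by blast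
    have "config_eq (exec_seq \<alpha> m r (hseq m i D) c) (h_eff \<alpha> i \<phi> c)" for c
      unfolding config_eq_def
    proof
      fix j
      obtain x y \<theta> where cj: "c j = (x, y, \<theta>)" by (cases "c j") auto
      show "fst (exec_seq \<alpha> m r (hseq m i D) c j) = fst (h_eff \<alpha> i \<phi> c j) \<and>
        fst (snd (exec_seq \<alpha> m r (hseq m i D) c j)) = fst (snd (h_eff \<alpha> i \<phi> c j)) \<and>
        angle_eq (snd (snd (exec_seq \<alpha> m r (hseq m i D) c j))) (snd (snd (h_eff \<alpha> i \<phi> c j)))"
      proof (cases "\<alpha> i j")
        case True
        thus ?thesis using exec_hseq[OF im(1), where c=c and j=j, OF cj, of \<alpha> r D]
          unfolding h_eff_def cj angle_eq_def by (auto intro!: exI[of _ 1])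
      next
        case False
        have "\<theta> + 2*(D/r) + 2*pi - (\<theta> + \<phi>) = 2*pi*of_int (k+1)" using Dk by (simp add: algebra_simps)
        thus ?thesis using False exec_hseq[OF im(1), where c=c and j=j, OF cj, of \<alpha> r D]
          unfolding h_eff_def cj angle_eq_def by (auto intro!: exI[of _ "k+1"])
      qed
    qed
    thus ?thesis unfolding realizes_def using adm_h[OF D] by blast
  qed
  show "realizes \<alpha> m r (g_eff \<alpha> i d)"
  proof (cases "d > 0")
    case True
    show ?thesis
      by (rule g_from_prefix[OF r_pos im, where P="[(i,d)]" and d=d and a=0 and b="d/r"])
         (use True im in \<open>auto simp: admissible_seq_def exec_one[OF im(1)]\<close>)
  next
    case False
    show ?thesis
    proof (cases "d = 0")
      case True
      show ?thesis
        by (rule g_from_prefix[OF r_pos im, where P="[]" and d=d and a=0 and b=0])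
           (use True in \<open>auto simp: admissible_seq_def exec_seq_def\<close>)
    next
      case F2: False
      with False have dn: "-d > 0" by simp
      show ?thesis
        by (rule g_from_prefix[OF r_pos im, where P="[(m,pi),(i,-d),(m,pi)]" and d=d and a=1 and b="-d/r + 2*pi"])
           (use dn im in \<open>auto simp: admissible_seq_def exec_three[OF im(1)]\<close>)
    qed
  qed
qed

end
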